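(* Let $T$, $\mathcal{S}=\mathcal{S}_+\cup\mathcal{S}_-$, $\Psi$, $U$, $\lambda$ and $P_\lambda$ be as in the context. Consider the discrete-time QBD with phase space $\mathcal{S}$ and transition blocks $$A_{-1}=\begin{bmatrix}0&0\\0&(I-\lambda^{-1}U)^{-1}\end{bmatrix},\quad A_0=\begin{bmatrix}0&P_{\lambda+-}\\0&0\end{bmatrix},\quad A_1=\begin{bmatrix}P_{\lambda++}&0\\0&0\end{bmatrix}.$$ Then its $\mathcal{G}$-matrix is $$\mathcal{G}_A=\begin{bmatrix}0&\Psi\\0&(I-\lambda^{-1}U)^{-1}\end{bmatrix}.$$
   Context: $T$ is the generator of a continuous-time Markov chain on a finite set $\mathcal{S}=\mathcal{S}_+\cup\mathcal{S}_-$ (disjoint, both nonempty), partitioned into blocks $T_{++},T_{+-},T_{-+},T_{--}$ according to $\mathcal{S}_\pm$. $\Psi$ is the minimal nonnegative solution of $T_{+-}+\Psi T_{--}+T_{++}\Psi+\Psi T_{-+}\Psi=0$ (the first-return probability matrix of the unit-rate fluid queue with phase generator $T$, rates $+1$ on $\mathcal{S}_+$ and $-1$ on $\mathcal{S}_-$), and $U:=T_{--}+T_{-+}\Psi$. $\lambda>0$ satisfies $\lambda\ge\max_i|T_{ii}|$, and $P_\lambda:=I+\lambda^{-1}T$ with blocks $P_{\lambda++}$ etc. A discrete-time quasi-birth-death process (QBD) with transition blocks $L_{-1},L_0,L_1$ is a Markov chain $\{(Y_n,\kappa_n)\}$ on $\mathbb{Z}\times\mathcal{S}$ with $\mathbb{P}[Y_n=k+d,\kappa_n=j\mid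 Y_{n-1}=k,\kappa_{n-1}=i]=(L_d)_{ij}$ for $d\in\{-1,0,1\}$. Its $\mathcal{G}$-matrix has entries $\mathcal{G}_{ij}=\mathbb{P}[\theta<\infty,\kappa_\theta=j\mid Y_0=k,\kappa_0=i]$, where $\theta=\inf\{n>0:Y_n=k-1\}$. All matrices are partitioned into blocks according to $\mathcal{S}_+,\mathcal{S}_-$. *)

theory Defs
  imports "HOL-Analysis.Analysis"
begin

text \<open>Matrices indexed by the finite phase space 's are functions 's => 's => real.
  The phase space is UNIV :: 's set, partitioned into Sp and its complement Sm.\<close>

definition is_generator :: "('s::finite \<Rightarrow> 's \<Rightarrow> real) \<Rightarrow> bool" where
  "is_generator T \<longleftrightarrow> (\<forall>i j. i \<noteq> j \<longrightarrow> T i j \<ge> 0) \<and> (\<forall>i. (\<Sum>j\<in>UNIV. T i j) = 0)"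

definition riccati_sol :: "('s::finite \<Rightarrow> 's \<Rightarrow> real) \<Rightarrow> 's set \<Rightarrow> ('s \<Rightarrow> 's \<Rightarrow> real) \<Rightarrow> bool" where
  "riccati_sol T Sp Psi \<longleftrightarrow> (\<forall>i\<in>Sp. \<forall>j\<in>-Sp.
      T i j + (\<Sum>k\<in>-Sp. Psi i k * T k j) + (\<Sum>k\<in>Sp. T i k * Psi k j)
      + (\<Sum>k\<in>-Sp. \<Sum>l\<in>Sp. Psi i k * T k l * Psi l j) = 0)"

definition min_nonneg_riccati_sol :: "('s::finite \<Rightarrow> 's \<Rightarrow> real) \<Rightarrow> 's set \<Rightarrow> ('s \<Rightarrow> 's \<Rightarrow> real) \<Rightarrow> bool" where
  "min_nonneg_riccati_sol T Sp Psi \<longleftrightarrow>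
     (\<forall>i\<in>Sp. \<forall>j\<in>-Sp. Psi i j \<ge> 0) \<and> riccati_sol T Sp Psi \<and>
     (\<forall>Phi. (\<forall>i\<in>Sp. \<forall>j\<in>-Sp. Phi i j \<ge> 0) \<and> riccati_sol T Sp Phi
            \<longrightarrow> (\<forall>i\<in>Sp. \<forall>j\<in>-Sp. Psi i j \<le> Phi i j))"

definition Umat :: "('s::finite \<Rightarrow> 's \<Rightarrow> real) \<Rightarrow> 's set \<Rightarrow> ('s \<Rightarrow> 's \<Rightarrow> real) \<Rightarrow> 's \<Rightarrow> 's \<Rightarrow> real" where
  "Umat T Sp Psi i j = T i j + (\<Sum>k\<in>Sp. T i k * Psi k j)"

definition Plam :: "real \<Rightarrow> ('s \<Rightarrow> 's \<Rightarrow> real) \<Rightarrow> 's \<Rightarrow> 's \<Rightarrow> real" where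
  "Plam lam T i j = (if i = j then 1 else 0) + T i j / lam"

text \<open>QBD on Z x 's with blocks Lm (= L_{-1}), L0, L1. Starting from level k, phase i,
  taboo_dist Lm L0 L1 i n (m, s) is the probability that the chain is at level k+m in phase s
  at time n without having visited level k-1 at times 1..n (levels below k are only reachable
  through level k-1 since the level changes by at most one per step).\<close>
fun taboo_dist :: "('s::finite \<Rightarrow> 's \<Rightarrow> real) \<Rightarrow> ('s \<Rightarrow> 's \<Rightarrow> real) \<Rightarrow> ('s \<Rightarrow> 's \<Rightarrow> real)
    \<Rightarrow> 's \<Rightarrow> nat \<Rightarrow> nat \<Rightarrow> 's \<Rightarrow> real" where
  "taboo_dist Lm L0 L1 i 0 m s = (if m = 0 \<and> s = i then 1 else 0)"
| "taboo_dist Lm L0 L1 i (Suc n) m s =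
     (\<Sum>r\<in>UNIV. taboo_dist Lm L0 L1 i n (Suc m) r * Lm r s
              + taboo_dist Lm L0 L1 i n m r * L0 r s
              + (if m > 0 then taboo_dist Lm L0 L1 i n (m - 1) r * L1 r s else 0))"

text \<open>Probability that theta = n+1 and kappa_theta = j, given Y_0 = k, kappa_0 = i.\<close>
definition first_passage :: "('s::finite \<Rightarrow> 's \<Rightarrow> real) \<Rightarrow> ('s \<Rightarrow> 's \<Rightarrow> real) \<Rightarrow> ('s \<Rightarrow> 's \<Rightarrow> real)
    \<Rightarrow> nat \<Rightarrow> 's \<Rightarrow> 's \<Rightarrow> real" where
  "first_passage Lm L0 L1 n i j = (\<Sum>r\<in>UNIV. taboo_dist Lm L0 L1 i n 0 r * Lm r j)"

text \<open>G-matrix: G_ij = P[theta < infinity, kappa_theta = j | Y_0 = k, kappa_0 = i].\<close>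
definition qbd_G :: "('s::finite \<Rightarrow> 's \<Rightarrow> real) \<Rightarrow> ('s \<Rightarrow> 's \<Rightarrow> real) \<Rightarrow> ('s \<Rightarrow> 's \<Rightarrow> real)
    \<Rightarrow> 's \<Rightarrow> 's \<Rightarrow> real" where
  "qbd_G Lm L0 L1 i j = (\<Sum>n. first_passage Lm L0 L1 n i j)"

end

theory Submission
  imports Defs "HOL-Library.Function_Algebras"
begin


definition mm :: "('s::finite \<Rightarrow> 's \<Rightarrow> real) \<Rightarrow> ('s \<Rightarrow> 's \<Rightarrow> real) \<Rightarrow> 's \<Rightarrow> 's \<Rightarrow> real" where
  "mm A B = (\<lambda>i j. \<Sum>k\<in>UNIV. A i k * B k j)"

definition Idm :: "'s \<Rightarrow> 's \<Rightarrow> real" where "Idm = (\<lambda>i j. if i = j then 1 else 0)"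

primrec mpow :: "('s::finite \<Rightarrow> 's \<Rightarrow> real) \<Rightarrow> nat \<Rightarrow> 's \<Rightarrow> 's \<Rightarrow> real" where
  "mpow A 0 = Idm" | "mpow A (Suc n) = mm (mpow A n) A"

lemma if01_mult: "(if P then 1 else 0) * (x::real) = (if P then x else 0)"
  "x * (if P then 1 else 0) = (if P then x else 0)" by auto

lemma mm_assoc: "mm (mm A B) C = mm A (mm B C)"
proof (intro ext)
  fix i j
  have "mm (mm A B) C i j = (\<Sum>l\<in>UNIV. \<Sum>k\<in>UNIV. A i k * B k l * C l j)"
    unfolding mm_def by (simp add: sum_distrib_right)
  also have "\<dots> = (\<Sum>k\<in>UNIV. \<Sum>l\<in>UNIV. A i k * B k l * C l j)"
    by (rule sum.swap)
  also have "\<dots> = mm A (mm B C) i j"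
    unfolding mm_def by (simp add: sum_distrib_left mult.assoc)
  finally show "mm (mm A B) C i j = mm A (mm B C) i j" .
qed

lemma mm_Id_left[simp]: "mm Idm A = A" and mm_Id_right[simp]: "mm A Idm = A"
  by (auto simp: mm_def Idm_def if01_mult intro!: ext)

lemma mpow_Suc': "mpow A (Suc n) = mm A (mpow A n)"
  by (induction n) (simp_all add: mm_assoc)

lemma mm_add_left: "mm (A + B) C = mm A C + mm B C"
  and mm_add_right: "mm A (B + C) = mm A B + mm A C"
  by (auto simp: mm_def algebra_simps sum.distrib intro!: ext)

lemma mm_zero[simp]: "mm 0 A = 0" "mm A 0 = 0"
  by (auto simp: mm_def intro!: ext)

lemma mm_if_left: "mm (if c then A else 0) B = (if c then mm A B else 0)"
  and mm_if_right: "mm B (if c then A else 0) = (if c then mm B A else 0)"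
  by auto

lemma mm_nonneg: "(\<And>i j. A i j \<ge> 0) \<Longrightarrow> (\<And>i j. B i j \<ge> 0) \<Longrightarrow> mm A B i j \<ge> 0"
  unfolding mm_def by (auto intro!: sum_nonneg)

lemma mpow_nonneg: "(\<And>i j. A i j \<ge> 0) \<Longrightarrow> mpow A n i j \<ge> 0"
  by (induction n arbitrary: i j) (auto simp: Idm_def intro!: mm_nonneg)

lemma sum_pad: "(\<Sum>k\<in>UNIV. if k \<in> A then f k else 0) = sum f (A::'s::finite set)"
  by (simp add: sum.If_cases)

lemma sum_split_Compl: "sum f (A::'s::finite set) + sum f (- A) = sum f UNIV"
proof -
  have "sum f (A \<union> -A) = sum f A + sum f (-A)"
    by (rule sum.union_disjoint) auto
  then show ?thesis by simp
qed



locale setting =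
  fixes T Psi X :: "'s::finite \<Rightarrow> 's \<Rightarrow> real" and Sp :: "'s set" and lam :: real
  assumes gen: "is_generator T" and Spne: "Sp \<noteq> {}" and Smne: "- Sp \<noteq> {}"
    and minsol: "min_nonneg_riccati_sol T Sp Psi"
    and lampos: "lam > 0" and lamge: "\<forall>i. lam \<ge> \<bar>T i i\<bar>"
    and XL: "\<forall>i\<in>-Sp. \<forall>j\<in>-Sp.
           (\<Sum>k\<in>-Sp. X i k * ((if k = j then 1 else 0) - Umat T Sp Psi k j / lam))
             = (if i = j then 1 else 0)"
    and XR: "\<forall>i\<in>-Sp. \<forall>j\<in>-Sp.
           (\<Sum>k\<in>-Sp. ((if i = k then 1 else 0) - Umat T Sp Psi i k / lam) * X k j)
             = (if i = j then 1 else 0)"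
begin

definition "P = Plam lam T"

lemma P_nonneg: "P i j \<ge> 0"
proof (cases "i = j")
  case True
  have "\<bar>T i i\<bar> \<le> lam" using lamge by auto
  hence "- lam \<le> T i i" by arith
  hence "- 1 \<le> T i i / lam" using lampos by (simp add: le_divide_eq)
  then show ?thesis using True by (simp add: P_def Plam_def)
next
  case False
  then show ?thesis using gen lampos by (simp add: P_def Plam_def is_generator_def)
qed

lemma P_rowsum: "(\<Sum>j\<in>UNIV. P i j) = 1"
proof -
  have "(\<Sum>j\<in>UNIV. P i j) = (\<Sum>j\<in>UNIV. (if i = j then 1 else 0)) + (\<Sum>j\<in>UNIV. T i j) / lam"
    by (simp add: P_def Plam_def sum.distrib sum_divide_distrib)
  also have "\<dots> = 1" using gen by (simp add: is_generator_def)
  finally show ?thesis .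
qed

lemma T_eq: "T i j = lam * (P i j - Idm i j)"
  using lampos by (simp add: P_def Plam_def Idm_def)

definition Fmap :: "('s \<Rightarrow> 's \<Rightarrow> real) \<Rightarrow> 's \<Rightarrow> 's \<Rightarrow> real" where
  "Fmap Phi i j = (if i \<in> Sp \<and> j \<in> -Sp then
     (P i j + (\<Sum>k\<in>-Sp. Phi i k * P k j) + (\<Sum>k\<in>Sp. P i k * Phi k j)
       + (\<Sum>k\<in>-Sp. \<Sum>l\<in>Sp. Phi i k * P k l * Phi l j)) / 2 else 0)"

lemma ric_expr:
  assumes i: "i \<in> Sp" and j: "j \<in> -Sp"
  shows "T i j + (\<Sum>k\<in>-Sp. Phi i k * T k j) + (\<Sum>k\<in>Sp. T i k * Phi k j)
      + (\<Sum>k\<in>-Sp. \<Sum>l\<in>Sp. Phi i k * T k l * Phi l j) = lam * (2 * Fmap Phi i j - 2 * Phi i j)"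
proof -
  have ij: "i \<noteq> j" using i j by auto
  have e1: "T i j = lam * P i j" using ij by (simp add: T_eq Idm_def)
  have e2: "(\<Sum>k\<in>-Sp. Phi i k * T k j) = lam * (\<Sum>k\<in>-Sp. Phi i k * P k j) - lam * Phi i j"
  proof -
    have "(\<Sum>k\<in>-Sp. Phi i k * T k j) = (\<Sum>k\<in>-Sp. lam * (Phi i k * P k j) - lam * (if k = j then Phi i k else 0))"
      by (rule sum.cong) (auto simp: T_eq Idm_def algebra_simps)
    also have "\<dots> = lam * (\<Sum>k\<in>-Sp. Phi i k * P k j) - lam * Phi i j"
      using j by (simp add: sum_subtractf sum_distrib_left[symmetric] sum.delta')
    finally show ?thesis .
  qed
  have e3: "(\<Sum>k\<in>Sp. T i k * Phi k j) = lam * (\<Sum>k\<in>Sp. P i k * Phi k j) - lam * Phi i j"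
  proof -
    have "(\<Sum>k\<in>Sp. T i k * Phi k j) = (\<Sum>k\<in>Sp. lam * (P i k * Phi k j) - lam * (if i = k then Phi k j else 0))"
      by (rule sum.cong) (auto simp: T_eq Idm_def algebra_simps)
    also have "\<dots> = lam * (\<Sum>k\<in>Sp. P i k * Phi k j) - lam * Phi i j"
      using i by (simp add: sum_subtractf sum_distrib_left[symmetric] sum.delta)
    finally show ?thesis .
  qed
  have e4: "(\<Sum>k\<in>-Sp. \<Sum>l\<in>Sp. Phi i k * T k l * Phi l j) = lam * (\<Sum>k\<in>-Sp. \<Sum>l\<in>Sp. Phi i k * P k l * Phi l j)"
    by (auto simp: sum_distrib_left T_eq Idm_def intro!: sum.cong)
  show ?thesis unfolding e1 e2 e3 e4 using i j by (simp add: Fmap_def algebra_simps)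
qed

lemma riccati_iff: "riccati_sol T Sp Phi \<longleftrightarrow> (\<forall>i\<in>Sp. \<forall>j\<in>-Sp. Fmap Phi i j = Phi i j)"
  unfolding riccati_sol_def using ric_expr lampos by auto


lemma Fmap_out: "\<not> (i \<in> Sp \<and> j \<in> -Sp) \<Longrightarrow> Fmap Phi i j = 0"
  by (auto simp: Fmap_def)

lemma Fmap_nonneg:
  assumes "\<forall>i\<in>Sp. \<forall>j\<in>-Sp. 0 \<le> A i j"
  shows "Fmap A i j \<ge> 0"
  using assms P_nonneg by (auto simp: Fmap_def intro!: sum_nonneg add_nonneg_nonneg mult_nonneg_nonneg)

lemma Fmap_mono:
  assumes "\<forall>i\<in>Sp. \<forall>j\<in>-Sp. 0 \<le> A i j \<and> A i j \<le> B i j"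
  shows "Fmap A i j \<le> Fmap B i j"
proof (cases "i \<in> Sp \<and> j \<in> -Sp")
  case True
  have a0: "\<And>i j. i \<in> Sp \<Longrightarrow> j \<in> -Sp \<Longrightarrow> 0 \<le> A i j" and ab: "\<And>i j. i \<in> Sp \<Longrightarrow> j \<in> -Sp \<Longrightarrow> A i j \<le> B i j"
    using assms by auto
  have s1: "(\<Sum>k\<in>-Sp. A i k * P k j) \<le> (\<Sum>k\<in>-Sp. B i k * P k j)"
    using True ab P_nonneg by (auto intro!: sum_mono mult_right_mono)
  have s2: "(\<Sum>k\<in>Sp. P i k * A k j) \<le> (\<Sum>k\<in>Sp. P i k * B k j)"
    using True ab P_nonneg by (auto intro!: sum_mono mult_left_mono)
  have s3: "(\<Sum>k\<in>-Sp. \<Sum>l\<in>Sp. A i k * P k l * A l j) \<le> (\<Sum>k\<in>-Sp. \<Sum>l\<in>Sp. B i k * P k l * B l j)"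
    using True ab a0 P_nonneg by (auto intro!: sum_mono mult_mono mult_nonneg_nonneg order_trans[OF a0 ab])
  show ?thesis using True s1 s2 s3 by (simp add: Fmap_def)
qed (auto simp: Fmap_def)

primrec Phis :: "nat \<Rightarrow> 's \<Rightarrow> 's \<Rightarrow> real" where
  "Phis 0 = (\<lambda>i j. 0)" | "Phis (Suc k) = Fmap (Phis k)"

lemma Phis_nonneg: "Phis k i j \<ge> 0"
  by (induction k arbitrary: i j) (auto intro!: Fmap_nonneg)

lemma Phis_inc: "Phis k i j \<le> Phis (Suc k) i j"
proof (induction k arbitrary: i j)
  case 0 then show ?case using Fmap_nonneg[of "\<lambda>i j. 0"] by simp
next
  case (Suc k) then show ?case using Phis_nonneg by (simp add: Fmap_mono)
qed

lemma Phis_le: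
  assumes "\<forall>i\<in>Sp. \<forall>j\<in>-Sp. 0 \<le> B i j \<and> Fmap B i j \<le> B i j"
  shows "i \<in> Sp \<Longrightarrow> j \<in> -Sp \<Longrightarrow> Phis k i j \<le> B i j"
proof (induction k arbitrary: i j)
  case 0 then show ?case using assms by auto
next
  case (Suc k)
  have "Fmap (Phis k) i j \<le> Fmap B i j" using Suc Phis_nonneg by (intro Fmap_mono) auto
  then show ?case using assms Suc.prems by force
qed

lemma Fmap_rowsum:
  assumes i: "i \<in> Sp" and nn: "\<And>i j. 0 \<le> A i j" and rs: "\<And>i. i \<in> Sp \<Longrightarrow> (\<Sum>j\<in>-Sp. A i j) \<le> 1"
  shows "(\<Sum>j\<in>-Sp. Fmap A i j) \<le> 1"
proof -
  define a where "a = (\<Sum>j\<in>-Sp. P i j)"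
  define b where "b = (\<Sum>k\<in>-Sp. A i k * (\<Sum>j\<in>-Sp. P k j))"
  define c where "c = (\<Sum>k\<in>Sp. P i k * (\<Sum>j\<in>-Sp. A k j))"
  define d where "d = (\<Sum>k\<in>-Sp. A i k * (\<Sum>l\<in>Sp. P k l * (\<Sum>j\<in>-Sp. A l j)))"
  have sb: "(\<Sum>j\<in>-Sp. \<Sum>k\<in>-Sp. A i k * P k j) = b"
    unfolding b_def by (subst sum.swap) (simp add: sum_distrib_left)
  have sc: "(\<Sum>j\<in>-Sp. \<Sum>k\<in>Sp. P i k * A k j) = c"
    unfolding c_def by (subst sum.swap) (simp add: sum_distrib_left)
  have sd: "(\<Sum>j\<in>-Sp. \<Sum>k\<in>-Sp. \<Sum>l\<in>Sp. A i k * P k l * A l j) = d"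
  proof -
    have "(\<Sum>j\<in>-Sp. \<Sum>k\<in>-Sp. \<Sum>l\<in>Sp. A i k * P k l * A l j) = (\<Sum>k\<in>-Sp. \<Sum>j\<in>-Sp. \<Sum>l\<in>Sp. A i k * P k l * A l j)"
      by (rule sum.swap)
    also have "\<dots> = (\<Sum>k\<in>-Sp. \<Sum>l\<in>Sp. \<Sum>j\<in>-Sp. A i k * P k l * A l j)"
      by (rule sum.cong[OF refl], rule sum.swap)
    also have "\<dots> = d" unfolding d_def by (simp add: sum_distrib_left mult.assoc)
    finally show ?thesis .
  qed
  have eq: "(\<Sum>j\<in>-Sp. Fmap A i j) = (a + b + c + d) / 2"
    using i unfolding a_def sb[symmetric] sc[symmetric] sd[symmetric]
    by (simp add: Fmap_def sum.distrib sum_divide_distrib[symmetric])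
  have c1: "c \<le> (\<Sum>k\<in>Sp. P i k)" unfolding c_def
    using rs P_nonneg by (intro sum_mono) (simp add: mult_left_le)
  have d1: "d \<le> (\<Sum>k\<in>-Sp. A i k * (\<Sum>l\<in>Sp. P k l))" unfolding d_def
    using rs P_nonneg nn by (intro sum_mono mult_left_mono) (auto intro!: sum_mono simp: mult_left_le)
  have ac: "a + (\<Sum>k\<in>Sp. P i k) = 1" unfolding a_def using sum_split_Compl[of "P i" Sp] P_rowsum by simp
  have bd: "b + (\<Sum>k\<in>-Sp. A i k * (\<Sum>l\<in>Sp. P k l)) = (\<Sum>k\<in>-Sp. A i k)"
    unfolding b_def sum.distrib[symmetric] distrib_left[symmetric]
    using sum_split_Compl[of "P _" Sp] P_rowsum by (simp add: add.commute)
  have "(\<Sum>k\<in>-Sp. A i k) \<le> 1" using rs i by simp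
  with c1 d1 ac bd eq show ?thesis by simp
qed

lemma Phis_rowsum: "i \<in> Sp \<Longrightarrow> (\<Sum>j\<in>-Sp. Phis k i j) \<le> 1"
proof (induction k arbitrary: i)
  case 0 then show ?case by simp
next
  case (Suc k) then show ?case using Fmap_rowsum Phis_nonneg by simp
qed

lemma Psi_nonneg: "i \<in> Sp \<Longrightarrow> j \<in> -Sp \<Longrightarrow> Psi i j \<ge> 0"
  using minsol by (auto simp: min_nonneg_riccati_sol_def)

lemma Psi_fix: "i \<in> Sp \<Longrightarrow> j \<in> -Sp \<Longrightarrow> Fmap Psi i j = Psi i j"
  using minsol riccati_iff by (auto simp: min_nonneg_riccati_sol_def)

definition "Limt i j = (SUP k. Phis k i j)"

lemma Phis_tendsto: "(\<lambda>k. Phis k i j) \<longlonglongrightarrow> Limt i j"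
  unfolding Limt_def
proof (rule LIMSEQ_incseq_SUP)
  show "incseq (\<lambda>k. Phis k i j)" by (rule incseq_SucI) (rule Phis_inc)
  show "bdd_above (range (\<lambda>k. Phis k i j))"
  proof (cases "i \<in> Sp \<and> j \<in> -Sp")
    case True
    then have "\<And>k. Phis k i j \<le> Psi i j"
      using Psi_nonneg Psi_fix by (intro Phis_le) auto
    then show ?thesis by (auto intro!: bdd_aboveI)
  next
    case False
    then have "\<And>k. Phis k i j \<le> 0" by (case_tac k) (auto simp: Fmap_def)
    then show ?thesis by (auto intro!: bdd_aboveI)
  qed
qed

lemma Lim_fix: "Fmap Limt i j = Limt i j"
proof -
  have "(\<lambda>k. Fmap (Phis k) i j) \<longlonglongrightarrow> Fmap Limt i j"
    unfolding Fmap_def by (auto intro!: tendsto_intros Phis_tendsto)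
  moreover have "(\<lambda>k. Fmap (Phis k) i j) \<longlonglongrightarrow> Limt i j"
    using LIMSEQ_Suc[OF Phis_tendsto[of i j]] by simp
  ultimately show ?thesis by (rule LIMSEQ_unique)
qed

lemma Lim_nonneg: "Limt i j \<ge> 0"
  by (rule LIMSEQ_le_const[OF Phis_tendsto]) (use Phis_nonneg in auto)

lemma Lim_rowsum: "i \<in> Sp \<Longrightarrow> (\<Sum>j\<in>-Sp. Limt i j) \<le> 1"
proof -
  have "(\<lambda>k. \<Sum>j\<in>-Sp. Phis k i j) \<longlonglongrightarrow> (\<Sum>j\<in>-Sp. Limt i j)"
    by (intro tendsto_sum Phis_tendsto)
  moreover assume "i \<in> Sp"
  ultimately show ?thesis using Phis_rowsum by (intro LIMSEQ_le_const2) auto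
qed

lemma Psi_le_Lim: "i \<in> Sp \<Longrightarrow> j \<in> -Sp \<Longrightarrow> Psi i j \<le> Limt i j"
proof -
  have "riccati_sol T Sp Limt" using riccati_iff Lim_fix by auto
  then show "i \<in> Sp \<Longrightarrow> j \<in> -Sp \<Longrightarrow> Psi i j \<le> Limt i j"
    using minsol Lim_nonneg unfolding min_nonneg_riccati_sol_def by blast
qed

lemma Psi_rowsum: "i \<in> Sp \<Longrightarrow> (\<Sum>j\<in>-Sp. Psi i j) \<le> 1"
  using Lim_rowsum[of i] sum_mono[of "-Sp" "Psi i" "Limt i"] Psi_le_Lim by force

lemma Psi_le_super:
  assumes "\<forall>i\<in>Sp. \<forall>j\<in>-Sp. 0 \<le> B i j \<and> Fmap B i j \<le> B i j"
  shows "i \<in> Sp \<Longrightarrow> j \<in> -Sp \<Longrightarrow> Psi i j \<le> B i j"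
proof -
  assume ij: "i \<in> Sp" "j \<in> -Sp"
  have "Limt i j \<le> B i j"
    by (rule LIMSEQ_le_const2[OF Phis_tendsto]) (use Phis_le[OF assms ij] in auto)
  with Psi_le_Lim[OF ij] show ?thesis by simp
qed


definition "M i j = P i j + (\<Sum>k\<in>Sp. P i k * Psi k j)"

lemma M_nonneg: "i \<in> -Sp \<Longrightarrow> j \<in> -Sp \<Longrightarrow> M i j \<ge> 0"
  unfolding M_def using P_nonneg Psi_nonneg by (auto intro!: add_nonneg_nonneg sum_nonneg mult_nonneg_nonneg)

lemma M_rowsum: "i \<in> -Sp \<Longrightarrow> (\<Sum>j\<in>-Sp. M i j) \<le> 1"
proof -
  assume i: "i \<in> -Sp"
  have "(\<Sum>j\<in>-Sp. M i j) = (\<Sum>j\<in>-Sp. P i j) + (\<Sum>k\<in>Sp. P i k * (\<Sum>j\<in>-Sp. Psi k j))"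
    unfolding M_def sum.distrib by (subst sum.swap) (simp add: sum_distrib_left)
  also have "\<dots> \<le> (\<Sum>j\<in>-Sp. P i j) + (\<Sum>k\<in>Sp. P i k)"
    using Psi_rowsum P_nonneg by (auto intro!: sum_mono simp: mult_left_le)
  also have "\<dots> = 1" using sum_split_Compl[of "P i" Sp] P_rowsum by simp
  finally show ?thesis .
qed

lemma U_eq: "i \<in> -Sp \<Longrightarrow> j \<in> -Sp \<Longrightarrow> Umat T Sp Psi i j / lam = M i j - Idm i j"
proof -
  assume i: "i \<in> -Sp" and j: "j \<in> -Sp"
  have "(\<Sum>k\<in>Sp. T i k * Psi k j) = lam * (\<Sum>k\<in>Sp. P i k * Psi k j)"
    using i by (auto simp: sum_distrib_left T_eq Idm_def intro!: sum.cong)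
  then show ?thesis using lampos
    by (simp add: Umat_def M_def T_eq add_divide_distrib)
qed

lemma XR': "i \<in> -Sp \<Longrightarrow> j \<in> -Sp \<Longrightarrow> 2 * X i j - (\<Sum>k\<in>-Sp. M i k * X k j) = Idm i j"
proof -
  assume i: "i \<in> -Sp" and j: "j \<in> -Sp"
  have "(\<Sum>k\<in>-Sp. ((if i = k then 1 else 0) - Umat T Sp Psi i k / lam) * X k j)
     = (\<Sum>k\<in>-Sp. 2 * (if i = k then X k j else 0) - M i k * X k j)"
    using i by (intro sum.cong) (auto simp: U_eq Idm_def algebra_simps)
  also have "\<dots> = 2 * X i j - (\<Sum>k\<in>-Sp. M i k * X k j)"
    using i by (simp add: sum_subtractf sum_distrib_left[symmetric] sum.delta)
  finally show ?thesis using XR i j by (simp add: Idm_def)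
qed

lemma XL': "i \<in> -Sp \<Longrightarrow> j \<in> -Sp \<Longrightarrow> 2 * X i j - (\<Sum>k\<in>-Sp. X i k * M k j) = Idm i j"
proof -
  assume i: "i \<in> -Sp" and j: "j \<in> -Sp"
  have "(\<Sum>k\<in>-Sp. X i k * ((if k = j then 1 else 0) - Umat T Sp Psi k j / lam))
     = (\<Sum>k\<in>-Sp. 2 * (if k = j then X i k else 0) - X i k * M k j)"
    using j by (intro sum.cong) (auto simp: U_eq Idm_def algebra_simps)
  also have "\<dots> = 2 * X i j - (\<Sum>k\<in>-Sp. X i k * M k j)"
    using j by (simp add: sum_subtractf sum_distrib_left[symmetric] sum.delta')
  finally show ?thesis using XL i j by (simp add: Idm_def)
qed

lemma X_nonneg: "i \<in> -Sp \<Longrightarrow> j \<in> -Sp \<Longrightarrow> X i j \<ge> 0"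
proof -
  define S where "S = (\<lambda>(i,j). X i j) ` ((-Sp) \<times> (-Sp))"
  have fS: "finite S" unfolding S_def by simp
  have neS: "S \<noteq> {}" unfolding S_def using Smne by auto
  define m where "m = Min S"
  have mle: "\<And>i j. i \<in> -Sp \<Longrightarrow> j \<in> -Sp \<Longrightarrow> m \<le> X i j"
    unfolding m_def using fS by (intro Min_le) (auto simp: S_def)
  have "m \<in> S" unfolding m_def using fS neS by (rule Min_in)
  then obtain i0 j0 where ij0: "i0 \<in> -Sp" "j0 \<in> -Sp" "X i0 j0 = m" unfolding S_def by auto
  have m0: "m \<ge> 0"
  proof (rule ccontr)
    assume "\<not> m \<ge> 0" hence mneg: "m < 0" by simp
    define s where "s = (\<Sum>k\<in>-Sp. M i0 k)"
    have s0: "s \<ge> 0" unfolding s_def using M_nonneg ij0 by (auto intro!: sum_nonneg)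
    have s1: "s \<le> 1" unfolding s_def using M_rowsum ij0 by auto
    have "(\<Sum>k\<in>-Sp. M i0 k * X k j0) \<ge> (\<Sum>k\<in>-Sp. M i0 k * m)"
      using M_nonneg mle ij0 by (auto intro!: sum_mono mult_left_mono)
    also have "(\<Sum>k\<in>-Sp. M i0 k * m) = s * m" unfolding s_def by (simp add: sum_distrib_right)
    finally have a: "(\<Sum>k\<in>-Sp. M i0 k * X k j0) \<ge> s * m" .
    have b: "s * m \<ge> m" using s1 mneg s0 by (simp add: mult_le_cancel_right1)
    have "Idm i0 j0 \<ge> 0" by (simp add: Idm_def)
    hence "2 * m \<ge> (\<Sum>k\<in>-Sp. M i0 k * X k j0)" using XR'[OF ij0(1,2)] ij0 by simp
    with a b mneg show False by simp
  qed
  show "i \<in> -Sp \<Longrightarrow> j \<in> -Sp \<Longrightarrow> X i j \<ge> 0" using mle m0 by force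
qed


definition "Lm = (\<lambda>i j. if i \<in> -Sp \<and> j \<in> -Sp then X i j else 0)"
definition "L0 = (\<lambda>i j. if i \<in> Sp \<and> j \<in> -Sp then Plam lam T i j else 0)"
definition "L1 = (\<lambda>i j. if i \<in> Sp \<and> j \<in> Sp then Plam lam T i j else 0)"
definition "pad Y = (\<lambda>i j. if i \<in> Sp \<and> j \<in> -Sp then Y i j else (0::real))"

lemma if0_mult: "(if c then a else 0) * (b::real) = (if c then a * b else 0)"
  "b * (if c then a else 0) = (if c then b * a else 0)" by auto

lemma Lm_nonneg: "Lm i j \<ge> 0" using X_nonneg by (simp add: Lm_def)
lemma L0_nonneg: "L0 i j \<ge> 0" using P_nonneg by (simp add: L0_def P_def[symmetric])
lemma L1_nonneg: "L1 i j \<ge> 0" using P_nonneg by (simp add: L1_def P_def[symmetric])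

lemma mm_L1: "mm L1 B i k = (if i \<in> Sp then (\<Sum>l\<in>Sp. P i l * B l k) else 0)"
  by (simp add: mm_def L1_def P_def[symmetric] if0_mult sum.If_cases Int_def)

lemma mm_Lm: "mm B Lm i j = (if j \<in> -Sp then (\<Sum>k\<in>-Sp. B i k * X k j) else 0)"
  by (simp add: mm_def Lm_def if0_mult sum.If_cases Int_def Collect_neg_eq)

lemma W_entry: "i \<in> Sp \<Longrightarrow> j \<in> -Sp \<Longrightarrow>
   mm (L0 + mm L1 B) Lm i j = (\<Sum>k\<in>-Sp. (P i k + (\<Sum>l\<in>Sp. P i l * B l k)) * X k j)"
  by (simp add: mm_Lm mm_L1 L0_def P_def[symmetric])

lemma W_out: "\<not> (i \<in> Sp \<and> j \<in> -Sp) \<Longrightarrow> mm (L0 + mm L1 B) Lm i j = 0"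
  by (auto simp: mm_Lm mm_L1 L0_def)

definition "N i j = 2 * Idm i j - M i j"

lemma NX: "i \<in> -Sp \<Longrightarrow> j \<in> -Sp \<Longrightarrow> (\<Sum>k\<in>-Sp. N i k * X k j) = Idm i j"
proof -
  assume i: "i \<in> -Sp" and j: "j \<in> -Sp"
  have "(\<Sum>k\<in>-Sp. N i k * X k j) = (\<Sum>k\<in>-Sp. 2 * (if i = k then X k j else 0) - M i k * X k j)"
    by (intro sum.cong) (auto simp: N_def Idm_def algebra_simps)
  also have "\<dots> = 2 * X i j - (\<Sum>k\<in>-Sp. M i k * X k j)"
    using i by (simp add: sum_subtractf sum_distrib_left[symmetric] sum.delta)
  finally show ?thesis using XR' i j by simp
qed

lemma XN: "i \<in> -Sp \<Longrightarrow> j \<in> -Sp \<Longrightarrow> (\<Sum>k\<in>-Sp. X i k * N k j) = Idm i j"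
proof -
  assume i: "i \<in> -Sp" and j: "j \<in> -Sp"
  have "(\<Sum>k\<in>-Sp. X i k * N k j) = (\<Sum>k\<in>-Sp. 2 * (if k = j then X i k else 0) - X i k * M k j)"
    by (intro sum.cong) (auto simp: N_def Idm_def algebra_simps)
  also have "\<dots> = 2 * X i j - (\<Sum>k\<in>-Sp. X i k * M k j)"
    using j by (simp add: sum_subtractf sum_distrib_left[symmetric] sum.delta')
  finally show ?thesis using XL' i j by simp
qed

definition "Wf Y i k = P i k + (\<Sum>l\<in>Sp. P i l * Y l k)"

lemma E_imp_fix:
  assumes E: "\<And>i j. i \<in> Sp \<Longrightarrow> j \<in> -Sp \<Longrightarrow> (\<Sum>k\<in>-Sp. Y i k * N k j) = Wf Y i j"
  shows "mm (L0 + mm L1 (pad Y)) Lm = pad Y"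
proof (intro ext)
  fix i j
  show "mm (L0 + mm L1 (pad Y)) Lm i j = pad Y i j"
  proof (cases "i \<in> Sp \<and> j \<in> -Sp")
    case True
    have pw: "\<And>k. k \<in> -Sp \<Longrightarrow> P i k + (\<Sum>l\<in>Sp. P i l * pad Y l k) = Wf Y i k"
      by (auto simp: Wf_def pad_def intro!: sum.cong)
    have "mm (L0 + mm L1 (pad Y)) Lm i j = (\<Sum>k\<in>-Sp. (P i k + (\<Sum>l\<in>Sp. P i l * pad Y l k)) * X k j)"
      using True by (simp add: W_entry)
    also have "\<dots> = (\<Sum>k\<in>-Sp. Wf Y i k * X k j)"
      by (intro sum.cong refl) (simp add: pw)
    also have "\<dots> = (\<Sum>k\<in>-Sp. (\<Sum>l\<in>-Sp. Y i l * N l k) * X k j)"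
      using True E by simp
    also have "\<dots> = (\<Sum>l\<in>-Sp. Y i l * (\<Sum>k\<in>-Sp. N l k * X k j))"
      by (simp add: sum_distrib_right sum_distrib_left mult.assoc) (rule sum.swap)
    also have "\<dots> = (\<Sum>l\<in>-Sp. Y i l * Idm l j)"
      using True by (intro sum.cong) (auto simp: NX)
    also have "\<dots> = Y i j" using True by (simp add: Idm_def if01_mult sum.delta')
    finally show ?thesis using True by (simp add: pad_def)
  next
    case False
    then show ?thesis by (auto simp: W_out pad_def)
  qed
qed

lemma fix_imp_E:
  assumes F: "mm (L0 + mm L1 (pad Y)) Lm = pad Y"
  shows "i \<in> Sp \<Longrightarrow> j \<in> -Sp \<Longrightarrow> (\<Sum>k\<in>-Sp. Y i k * N k j) = Wf Y i j"
proof -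
  assume i: "i \<in> Sp" and j: "j \<in> -Sp"
  have Yk: "\<And>k. k \<in> -Sp \<Longrightarrow> Y i k = (\<Sum>l\<in>-Sp. Wf Y i l * X l k)"
  proof -
    fix k assume k: "k \<in> -Sp"
    have pw: "\<And>l. l \<in> -Sp \<Longrightarrow> P i l + (\<Sum>m\<in>Sp. P i m * pad Y m l) = Wf Y i l"
      by (auto simp: Wf_def pad_def intro!: sum.cong)
    have "Y i k = pad Y i k" using i k by (simp add: pad_def)
    also have "\<dots> = mm (L0 + mm L1 (pad Y)) Lm i k" using F by simp
    also have "\<dots> = (\<Sum>l\<in>-Sp. (P i l + (\<Sum>m\<in>Sp. P i m * pad Y m l)) * X l k)"
      using i k by (simp add: W_entry)
    also have "\<dots> = (\<Sum>l\<in>-Sp. Wf Y i l * X l k)"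
      by (intro sum.cong refl) (simp add: pw)
    finally show "Y i k = (\<Sum>l\<in>-Sp. Wf Y i l * X l k)" .
  qed
  have "(\<Sum>k\<in>-Sp. Y i k * N k j) = (\<Sum>k\<in>-Sp. (\<Sum>l\<in>-Sp. Wf Y i l * X l k) * N k j)"
    by (intro sum.cong) (auto simp: Yk)
  also have "\<dots> = (\<Sum>l\<in>-Sp. Wf Y i l * (\<Sum>k\<in>-Sp. X l k * N k j))"
    by (simp add: sum_distrib_right sum_distrib_left mult.assoc) (rule sum.swap)
  also have "\<dots> = (\<Sum>l\<in>-Sp. Wf Y i l * Idm l j)"
    using j by (intro sum.cong) (auto simp: XN)
  also have "\<dots> = Wf Y i j" using j by (simp add: Idm_def if01_mult sum.delta')
  finally show ?thesis .
qed

lemma NM_sum: "(\<Sum>k\<in>-Sp. Y i k * N k j) = 2 * Y i j - (\<Sum>k\<in>-Sp. Y i k * P k j) - (\<Sum>k\<in>-Sp. \<Sum>l\<in>Sp. Y i k * P k l * Psi l j)"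
  if j: "j \<in> -Sp" for Y i j
proof -
  have "(\<Sum>k\<in>-Sp. Y i k * N k j) = (\<Sum>k\<in>-Sp. 2 * (if k = j then Y i k else 0) - Y i k * P k j - (\<Sum>l\<in>Sp. Y i k * P k l * Psi l j))"
    by (intro sum.cong) (auto simp: N_def M_def Idm_def algebra_simps sum_distrib_left)
  also have "\<dots> = 2 * Y i j - (\<Sum>k\<in>-Sp. Y i k * P k j) - (\<Sum>k\<in>-Sp. \<Sum>l\<in>Sp. Y i k * P k l * Psi l j)"
    using j by (simp add: sum_subtractf sum_distrib_left[symmetric] sum.delta')
  finally show ?thesis .
qed

lemma Psi_E: "i \<in> Sp \<Longrightarrow> j \<in> -Sp \<Longrightarrow> (\<Sum>k\<in>-Sp. Psi i k * N k j) = Wf Psi i j"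
  using Psi_fix[of i j] by (simp add: NM_sum Fmap_def Wf_def field_simps)

lemma Psip_fix: "mm (L0 + mm L1 (pad Psi)) Lm = pad Psi"
  by (rule E_imp_fix) (rule Psi_E)


definition "gt a = mm (mm (mpow L1 a) L0) (mpow Lm (Suc a))"
definition "Rr n = mm (mm (mpow L1 n) (pad Psi)) (mpow Lm n)"

lemma mpow_comm: "mm A (mpow A n) = mm (mpow A n) A"
  using mpow_Suc'[of A n] by simp

lemma gt_nonneg: "gt a i j \<ge> 0"
  unfolding gt_def by (intro mm_nonneg mpow_nonneg L1_nonneg L0_nonneg Lm_nonneg)

lemma padPsi_nonneg: "pad Psi i j \<ge> 0"
  using Psi_nonneg by (simp add: pad_def)

lemma Rr_nonneg: "Rr n i j \<ge> 0"
  unfolding Rr_def by (intro mm_nonneg mpow_nonneg L1_nonneg padPsi_nonneg Lm_nonneg)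

lemma Rr_step: "Rr n = gt n + Rr (Suc n)"
proof -
  have "Rr n = mm (mm (mpow L1 n) (mm (L0 + mm L1 (pad Psi)) Lm)) (mpow Lm n)"
    unfolding Rr_def by (simp only: Psip_fix)
  also have "\<dots> = gt n + Rr (Suc n)"
    by (simp add: Rr_def gt_def mm_assoc mm_add_left mm_add_right mpow_comm)
  finally show ?thesis .
qed

lemma sum_fun_apply: "(\<Sum>a\<in>A. f a) x = (\<Sum>a\<in>A. f a x)"
  by (induction A rule: infinite_finite_induct) auto

lemma partial: "pad Psi = (\<Sum>a<n. gt a) + Rr n"
proof (induction n)
  case 0 show ?case by (simp add: Rr_def)
next
  case (Suc n) then show ?case using Rr_step[of n] by (simp add: add.assoc)
qed

lemma gt_partial_le: "(\<Sum>a<n. gt a i j) \<le> pad Psi i j"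
proof -
  have "pad Psi i j = (\<Sum>a<n. gt a i j) + Rr n i j"
    using fun_cong[OF fun_cong[OF partial[of n]], of i j] by (simp add: sum_fun_apply)
  then show ?thesis using Rr_nonneg[of n i j] by simp
qed

definition "Gm i j = (\<Sum>a. gt a i j)"

lemma gt_summable: "summable (\<lambda>a. gt a i j)"
  by (rule summableI_nonneg_bounded[OF gt_nonneg gt_partial_le])

lemma gt_sums: "(\<lambda>a. gt a i j) sums Gm i j"
  unfolding Gm_def using gt_summable by (rule summable_sums)

lemma Gm_le: "Gm i j \<le> pad Psi i j"
  unfolding Gm_def by (rule suminf_le_const[OF gt_summable gt_partial_le])

lemma Gm_nonneg: "Gm i j \<ge> 0"
  unfolding Gm_def by (rule suminf_nonneg[OF gt_summable gt_nonneg])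

lemma Gm_pad: "pad Gm = Gm"
proof (intro ext)
  fix i j
  show "pad Gm i j = Gm i j"
    using Gm_le[of i j] Gm_nonneg[of i j] by (auto simp: pad_def)
qed

lemma gt_Suc: "gt (Suc a) = mm (mm L1 (gt a)) Lm"
  by (simp only: gt_def mpow_Suc'[of L1 a] mpow.simps(2)[of Lm "Suc a"] mm_assoc)

lemma gt_0: "gt 0 = mm L0 Lm"
  by (simp add: gt_def)

lemma mm_sums:
  assumes "\<And>k l. (\<lambda>a. F a k l) sums (S k l)"
  shows "(\<lambda>a. mm (mm A (F a)) B i j) sums mm (mm A S) B i j"
  unfolding mm_def
  by (rule sums_sum, rule sums_mult2, rule sums_sum, rule sums_mult, rule assms)

lemma Gm_fix: "mm (L0 + mm L1 (pad Gm)) Lm = pad Gm"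
proof (intro ext)
  fix i j
  have "(\<lambda>a. gt (Suc a) i j) sums mm (mm L1 Gm) Lm i j"
    unfolding gt_Suc by (rule mm_sums[OF gt_sums])
  moreover have "(\<lambda>a. gt (Suc a) i j) sums (Gm i j - gt 0 i j)"
    using gt_sums[of i j] sums_Suc_iff[of "\<lambda>a. gt a i j" "Gm i j - gt 0 i j"] by simp
  ultimately have "mm (mm L1 Gm) Lm i j = Gm i j - gt 0 i j" by (rule sums_unique2)
  then show "mm (L0 + mm L1 (pad Gm)) Lm i j = pad Gm i j"
    by (simp add: Gm_pad mm_add_left gt_0)
qed

lemma Gm_le': "l \<in> Sp \<Longrightarrow> j \<in> -Sp \<Longrightarrow> Gm l j \<le> Psi l j"
  using Gm_le[of l j] by (simp add: pad_def)

lemma Gm_Fmap: "i \<in> Sp \<Longrightarrow> j \<in> -Sp \<Longrightarrow> Fmap Gm i j \<le> Gm i j"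
proof -
  assume i: "i \<in> Sp" and j: "j \<in> -Sp"
  have E: "(\<Sum>k\<in>-Sp. Gm i k * N k j) = Wf Gm i j" by (rule fix_imp_E[OF Gm_fix i j])
  have le: "(\<Sum>k\<in>-Sp. \<Sum>l\<in>Sp. Gm i k * P k l * Gm l j) \<le> (\<Sum>k\<in>-Sp. \<Sum>l\<in>Sp. Gm i k * P k l * Psi l j)"
    using Gm_le' j by (auto intro!: sum_mono mult_left_mono mult_nonneg_nonneg Gm_nonneg P_nonneg)
  show ?thesis using E le i j by (simp add: NM_sum Fmap_def Wf_def field_simps)
qed

lemma Gm_eq: "i \<in> Sp \<Longrightarrow> j \<in> -Sp \<Longrightarrow> Gm i j = Psi i j"
proof -
  assume i: "i \<in> Sp" and j: "j \<in> -Sp"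
  have "Psi i j \<le> Gm i j"
    by (rule Psi_le_super[OF _ i j]) (use Gm_nonneg Gm_Fmap in auto)
  moreover have "Gm i j \<le> Psi i j" using Gm_le[of i j] i j by (simp add: pad_def)
  ultimately show ?thesis by simp
qed


lemma z_L0L1: "mm L0 L1 = 0" and z_LmL1: "mm Lm L1 = 0" and z_L0L0: "mm L0 L0 = 0"
  and z_LmL0: "mm Lm L0 = 0" and z_L1Lm: "mm L1 Lm = 0"
  by (auto simp: mm_def L0_def L1_def Lm_def intro!: ext sum.neutral)

definition "Rm a b = mm (mm (mpow L1 a) L0) (mpow Lm b)"

lemma L0pow_L1: "mm (mm L0 (mpow Lm b)) L1 = 0"
  by (cases b) (simp_all add: z_L0L1 z_LmL1 mm_assoc)

lemma L0pow_L0: "mm (mm L0 (mpow Lm b)) L0 = 0"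
  by (cases b) (simp_all add: z_L0L0 z_LmL0 mm_assoc)

lemma Rm_L1: "mm (Rm a b) L1 = 0"
  unfolding Rm_def by (simp add: mm_assoc L0pow_L1[unfolded mm_assoc])

lemma Rm_L0: "mm (Rm a b) L0 = 0"
  unfolding Rm_def by (simp add: mm_assoc L0pow_L0[unfolded mm_assoc])

lemma Rm_Lm: "mm (Rm a b) Lm = Rm a (Suc b)"
  unfolding Rm_def by (simp add: mm_assoc)

lemma pow_L1_Lm: "mm (mpow L1 (Suc n)) Lm = 0"
  by (simp add: mm_assoc z_L1Lm)

lemma pow_L0: "mm (mpow L1 n) L0 = Rm n 0"
  by (simp add: Rm_def)

lemma pow_L1_L1: "mm (mpow L1 n) L1 = mpow L1 (Suc n)"
  by simp

definition "tf n m = (if m = n then mpow L1 n else 0)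
   + (if m < n \<and> even (n - 1 - m) then Rm ((n - 1 + m) div 2) ((n - 1 - m) div 2) else 0)"

lemma tf_step: "tf (Suc n) m = mm (tf n (Suc m)) Lm + mm (tf n m) L0 + (if 0 < m then mm (tf n (m - 1)) L1 else 0)"
proof -
  consider "m = Suc n" | "m = n" | "Suc m = n" | "Suc (Suc m) \<le> n" | "Suc n < m" by linarith
  then show ?thesis
  proof cases
    case 1 then show ?thesis
      by (simp add: tf_def mm_add_left mm_if_left Rm_L1 Rm_L0 Rm_Lm pow_L0)
  next
    case 2 then show ?thesis
      by (simp add: tf_def mm_add_left mm_if_left Rm_L1 Rm_L0 Rm_Lm pow_L0; arith)
  next
    case 3 then have n: "n = Suc m" by simp
    have a: "tf (Suc (Suc m)) m = 0" by (simp add: tf_def)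
    have b: "tf (Suc m) (Suc m) = mpow L1 (Suc m)" by (simp only: tf_def) simp
    have c: "tf (Suc m) m = Rm m 0" by (simp add: tf_def)
    have d: "0 < m \<Longrightarrow> tf (Suc m) (m - 1) = 0"
    proof -
      assume "0 < m"
      then have "Suc m - 1 - (m - 1) = 1" by simp
      then show ?thesis by (simp add: tf_def)
    qed
    show ?thesis unfolding n a b c using d pow_L1_Lm[of m] Rm_L0[of m 0] by simp
  next
    case 4
    then obtain d where n: "n = m + 2 + d" by (metis add.commute le_Suc_ex add_2_eq_Suc')
    have e1: "n - 1 - Suc m = d" using n by simp
    have e2: "Suc n - 1 - m = d + 2" using n by simp
    have e3: "n - 1 + Suc m = Suc n - 1 + m" using n by simp
    have A: "even (n - 1 - Suc m) \<longleftrightarrow> even (Suc n - 1 - m)" unfolding e1 e2 by simp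
    have B: "(n - 1 + Suc m) div 2 = (Suc n - 1 + m) div 2" unfolding e3 ..
    have C: "even (n - 1 - Suc m) \<Longrightarrow> Suc ((n - 1 - Suc m) div 2) = (Suc n - 1 - m) div 2"
      unfolding e1 e2 by auto
    show ?thesis using 4 A B C
      by (auto simp: tf_def mm_add_left mm_if_left Rm_L1 Rm_L0 Rm_Lm pow_L0)
  next
    case 5 then show ?thesis
      by (simp add: tf_def mm_add_left mm_if_left Rm_L1 Rm_L0 Rm_Lm pow_L0)
  qed
qed


lemma taboo_eq: "taboo_dist Lm L0 L1 i n m s = tf n m i s"
proof (induction n arbitrary: m s)
  case 0 then show ?case by (simp add: tf_def Idm_def)
next
  case (Suc n)
  have "taboo_dist Lm L0 L1 i (Suc n) m s
     = mm (tf n (Suc m)) Lm i s + mm (tf n m) L0 i s + (if 0 < m then mm (tf n (m - 1)) L1 i s else 0)"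
    by (cases "0 < m") (simp_all add: Suc.IH mm_def sum.distrib)
  also have "\<dots> = tf (Suc n) m i s" by (simp add: tf_step)
  finally show ?case .
qed

lemma fp_eq: "first_passage Lm L0 L1 n i j
   = (if n = 0 then Lm i j else 0) + (if odd n then gt ((n - 1) div 2) i j else 0)"
proof -
  have "first_passage Lm L0 L1 n i j = mm (tf n 0) Lm i j"
    by (simp add: first_passage_def taboo_eq mm_def)
  also have "\<dots> = (if n = 0 then Lm i j else 0) + (if odd n then gt ((n - 1) div 2) i j else 0)"
  proof (cases n)
    case 0 then show ?thesis by (simp add: tf_def)
  next
    case (Suc k)
    have "gt (k div 2) = Rm (k div 2) (Suc (k div 2))" by (simp add: gt_def Rm_def)
    then show ?thesis using Suc by (simp add: tf_def mm_add_left mm_if_left Rm_Lm)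
  qed
  finally show ?thesis .
qed

lemma qbd_sums: "(\<lambda>n. first_passage Lm L0 L1 n i j) sums (Lm i j + Gm i j)"
proof -
  have s1: "(\<lambda>n. if n = 0 then Lm i j else 0) sums Lm i j"
    using sums_single[of 0 "\<lambda>_. Lm i j"] by simp
  define f where "f n = (if odd n then gt ((n - 1) div 2) i j else 0)" for n
  have "(\<lambda>n. f (2 * n + 1)) sums Gm i j" unfolding f_def using gt_sums by simp
  moreover have "strict_mono (\<lambda>n::nat. 2 * n + 1)" by (rule strict_monoI) simp
  moreover have "\<And>n. n \<notin> range (\<lambda>n::nat. 2 * n + 1) \<Longrightarrow> f n = 0"
  proof -
    fix n :: nat assume "n \<notin> range (\<lambda>n. 2 * n + 1)"
    moreover have "odd n \<Longrightarrow> n = 2 * ((n - 1) div 2) + 1" by presburger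
    ultimately show "f n = 0" unfolding f_def by (metis rangeI)
  qed
  ultimately have s2: "f sums Gm i j" using sums_mono_reindex by blast
  show ?thesis using sums_add[OF s1 s2] by (simp add: fp_eq f_def)
qed

lemma main: "qbd_G Lm L0 L1 = (\<lambda>i j. if i \<in> Sp \<and> j \<in> -Sp then Psi i j
                  else if i \<in> -Sp \<and> j \<in> -Sp then X i j else 0)"
proof (intro ext)
  fix i j
  have "qbd_G Lm L0 L1 i j = Lm i j + Gm i j"
    unfolding qbd_G_def using qbd_sums by (rule sums_unique[symmetric])
  moreover have "\<not> (i \<in> Sp \<and> j \<in> -Sp) \<Longrightarrow> Gm i j = 0"
    using Gm_le[of i j] Gm_nonneg[of i j] by (auto simp: pad_def)
  ultimately show "qbd_G Lm L0 L1 i j = (if i \<in> Sp \<and> j \<in> -Sp then Psi i j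
                  else if i \<in> -Sp \<and> j \<in> -Sp then X i j else 0)"
    using Gm_eq[of i j] by (auto simp: Lm_def)
qed

end

theorem lemma1:
  fixes T Psi X :: "'s::finite \<Rightarrow> 's \<Rightarrow> real" and Sp :: "'s set" and lam :: real
  assumes "is_generator T"
    and "Sp \<noteq> {}" and "- Sp \<noteq> {}"
    and "min_nonneg_riccati_sol T Sp Psi"
    and "lam > 0" and "\<forall>i. lam \<ge> \<bar>T i i\<bar>"
    and "\<forall>i\<in>-Sp. \<forall>j\<in>-Sp.
           (\<Sum>k\<in>-Sp. X i k * ((if k = j then 1 else 0) - Umat T Sp Psi k j / lam))
             = (if i = j then 1 else 0)"
    and "\<forall>i\<in>-Sp. \<forall>j\<in>-Sp.
           (\<Sum>k\<in>-Sp. ((if i = k then 1 else 0) - Umat T Sp Psi i k / lam) * X k j)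
             = (if i = j then 1 else 0)"
  shows "qbd_G
           (\<lambda>i j. if i \<in> -Sp \<and> j \<in> -Sp then X i j else 0)
           (\<lambda>i j. if i \<in> Sp \<and> j \<in> -Sp then Plam lam T i j else 0)
           (\<lambda>i j. if i \<in> Sp \<and> j \<in> Sp then Plam lam T i j else 0)
         = (\<lambda>i j. if i \<in> Sp \<and> j \<in> -Sp then Psi i j
                  else if i \<in> -Sp \<and> j \<in> -Sp then X i j else 0)"
  proof -
  interpret s: setting T Psi X Sp lam using assms by unfold_locales auto
  show ?thesis using s.main by (simp add: s.Lm_def s.L0_def s.L1_def)
qed

end
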